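(* For every positive integer $p$, $$-2\sum_{n=0}^{\infty}\frac{\zeta(2n)}{(2n+p)\,2^{2n}}=\log 2+\sum_{k=1}^{\lfloor p/2\rfloor}\frac{p!\,(-1)^k(4^k-1)\,\zeta(2k+1)}{(p-2k)!\,(2\pi)^{2k}}+\delta_{\lfloor p/2\rfloor,\,p/2}\,\frac{p!\,(-1)^{p/2}\,\zeta(p+1)}{\pi^p},$$ where $\delta_{\lfloor p/2\rfloor,p/2}$ equals $1$ if $p$ is even and $0$ if $p$ is odd.
   Context: $\zeta$ denotes the Riemann zeta function; in the $n=0$ term of the series, $\zeta(0)=-\tfrac12$ (value of the analytic continuation). An empty sum (when $\lfloor p/2\rfloor=0$) is $0$. *)

theory Defs
  imports "HOL-Analysis.Analysis"
begin

text \<open>Riemann zeta at nonnegative integer arguments, as used in the statement: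
  zeta 0 = -1/2 (value of the analytic continuation), and for s >= 2 the
  convergent Dirichlet series. The value at s = 1 (a pole) is never used.\<close>
definition zeta_nat :: "nat \<Rightarrow> real" where
  "zeta_nat s = (if s = 0 then - 1 / 2 else (\<Sum>m. 1 / (real (Suc m)) ^ s))"

end

theory Submission
  imports Defs "HOL-Real_Asymp.Real_Asymp"
begin


fun cs :: "real \<Rightarrow> real \<Rightarrow> nat \<Rightarrow> real \<times> real" where
  "cs a e 0 = (0, (1 - e) / a)"
| "cs a e (Suc q) = (- (real (Suc q) / a) * snd (cs a e q),
      - ((1/2) ^ Suc q * e / a) + (real (Suc q) / a) * fst (cs a e q))"

lemma mom_integrals:
  fixes a e :: real
  assumes a: "a \<noteq> 0" and s: "sin (a/2) = 0" and c: "cos (a/2) = e"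
  shows "((\<lambda>x. x ^ q * cos (a * x)) has_integral fst (cs a e q)) {0..1/2}
       \<and> ((\<lambda>x. x ^ q * sin (a * x)) has_integral snd (cs a e q)) {0..1/2}"
proof (induction q)
  case 0
  have d1: "\<And>x. ((\<lambda>x. sin (a*x) / a) has_vector_derivative cos (a*x)) (at x within {0..1/2})"
    using a by (auto intro!: derivative_eq_intros simp: has_real_derivative_iff_has_vector_derivative[symmetric])
  have d2: "\<And>x. ((\<lambda>x. - cos (a*x) / a) has_vector_derivative sin (a*x)) (at x within {0..1/2})"
    using a by (auto intro!: derivative_eq_intros simp: has_real_derivative_iff_has_vector_derivative[symmetric])
  have i1: "((\<lambda>x. cos (a*x)) has_integral (sin (a*(1/2)) / a - sin (a*0)/a)) {0..1/2}"
    by (rule fundamental_theorem_of_calculus) (use d1 in auto)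
  have i2: "((\<lambda>x. sin (a*x)) has_integral (- cos (a*(1/2)) / a - (- cos (a*0)/a))) {0..1/2}"
    by (rule fundamental_theorem_of_calculus) (use d2 in auto)
  show ?case using i1 i2 s c by (simp add: diff_divide_distrib)
next
  case (Suc q)
  then have IH1: "((\<lambda>x. x ^ q * cos (a * x)) has_integral fst (cs a e q)) {0..1/2}"
    and IH2: "((\<lambda>x. x ^ q * sin (a * x)) has_integral snd (cs a e q)) {0..1/2}" by auto
  have bb: "bounded_bilinear ((*) :: real \<Rightarrow> real \<Rightarrow> real)" by (rule bounded_bilinear_mult)
  have dg: "\<And>x. ((\<lambda>x. x ^ Suc q) has_vector_derivative (real (Suc q) * x ^ q)) (at x)"
    using DERIV_pow[of "Suc q"] by (simp add: has_real_derivative_iff_has_vector_derivative[symmetric])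
  have ds: "\<And>x. ((\<lambda>x. sin (a*x) / a) has_vector_derivative cos (a*x)) (at x)"
    using a by (auto intro!: derivative_eq_intros simp: has_real_derivative_iff_has_vector_derivative[symmetric])
  have dc: "\<And>x. ((\<lambda>x. - cos (a*x) / a) has_vector_derivative sin (a*x)) (at x)"
    using a by (auto intro!: derivative_eq_intros simp: has_real_derivative_iff_has_vector_derivative[symmetric])
  have A1: "((\<lambda>x. sin (a*x) / a * (real (Suc q) * x ^ q)) has_integral
      (sin (a*(1/2)) / a * (1/2) ^ Suc q - sin (a*0) / a * 0 ^ Suc q - fst (cs a e (Suc q)))) {0..1/2}"
  proof -
    have "((\<lambda>x. (real (Suc q) / a) * (x ^ q * sin (a * x))) has_integral (real (Suc q) / a) * snd (cs a e q)) {0..1/2}"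
      by (rule has_integral_mult_right[OF IH2])
    then show ?thesis using s by (simp add: field_simps)
  qed
  have B1: "((\<lambda>x. cos (a*x) * x ^ Suc q) has_integral fst (cs a e (Suc q))) {0..1/2}"
    by (rule integration_by_parts[OF bb, where f="\<lambda>x. sin (a*x) / a" and g="\<lambda>x. x ^ Suc q"])
       (use A1 ds dg a in \<open>auto intro!: continuous_intros\<close>)
  have A2: "((\<lambda>x. - cos (a*x) / a * (real (Suc q) * x ^ q)) has_integral
      (- cos (a*(1/2)) / a * (1/2) ^ Suc q - (- cos (a*0) / a) * 0 ^ Suc q - snd (cs a e (Suc q)))) {0..1/2}"
  proof -
    have "((\<lambda>x. (- real (Suc q) / a) * (x ^ q * cos (a * x))) has_integral (- real (Suc q) / a) * fst (cs a e q)) {0..1/2}"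
      by (rule has_integral_mult_right[OF IH1])
    moreover have "(\<lambda>x. - cos (a*x) / a * (real (Suc q) * x ^ q)) = (\<lambda>x. (- real (Suc q) / a) * (x ^ q * cos (a * x)))"
      using a by (auto simp: fun_eq_iff field_simps)
    moreover have "(- cos (a*(1/2)) / a * (1/2) ^ Suc q - (- cos (a*0) / a) * 0 ^ Suc q - snd (cs a e (Suc q))) = (- real (Suc q) / a) * fst (cs a e q)"
      using c a by (simp add: field_simps)
    ultimately show ?thesis by simp
  qed
  have B2: "((\<lambda>x. sin (a*x) * x ^ Suc q) has_integral snd (cs a e (Suc q))) {0..1/2}"
    by (rule integration_by_parts[OF bb, where f="\<lambda>x. - cos (a*x) / a" and g="\<lambda>x. x ^ Suc q"])
       (use A2 dc dg a in \<open>auto intro!: continuous_intros\<close>)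
  show ?case using B1 B2 by (simp add: mult.commute)
qed



definition cf :: "real \<Rightarrow> real \<Rightarrow> nat \<Rightarrow> real" where
  "cf a e q = e * (\<Sum>l=1..(q+1) div 2. (-1)^(l+1) * fact q / fact (q+1-2*l) * (1/2)^(q+1-2*l) / a^(2*l))
     + (if odd q then (-1)^((q+1) div 2) * fact q / a^(q+1) else 0)"

lemma cs_closed:
  assumes a: "a \<noteq> 0"
  shows "fst (cs a e q) = cf a e q"
proof (induction q rule: less_induct)
  case (less q)
  show ?case
  proof (cases q)
    case 0 then show ?thesis by (simp add: cf_def)
  next
    case (Suc r)
    show ?thesis
    proof (cases r)
      case 0
      with Suc show ?thesis using a by (simp add: cf_def field_simps power2_eq_square)
    next
      case (Suc s)
      with \<open>q = Suc r\<close> have q: "q = s + 2" by simp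
      have IH: "fst (cs a e s) = cf a e s" using less q by simp
      have rec: "fst (cs a e q) = (real (s+2) / a) * ((1/2)^(s+1) * e / a) - (real (s+2) * real (s+1) / a^2) * fst (cs a e s)"
        using q a by (simp add: power2_eq_square field_simps)
      define m where "m = (s+1) div 2"
      have m2: "(q+1) div 2 = m + 1" using q m_def by simp
      define f where "f = (\<lambda>l::nat. (-1::real)^(l+1) * fact q / fact (q+1-2*l) * (1/2)^(q+1-2*l) / a^(2*l))"
      define g where "g = (\<lambda>l::nat. (-1::real)^(l+1) * fact s / fact (s+1-2*l) * (1/2)^(s+1-2*l) / a^(2*l))"
      have sumq: "(\<Sum>l=1..(q+1) div 2. f l) = f 1 + (\<Sum>l=1..m. f (Suc l))"
      proof -
        have "(\<Sum>l=1..m+1. f l) = f 1 + (\<Sum>l=Suc 1..Suc m. f l)"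
          by (subst sum.atLeast_Suc_atMost) auto
        also have "(\<Sum>l=Suc 1..Suc m. f l) = (\<Sum>l=1..m. f (Suc l))"
          by (rule sum.shift_bounds_cl_Suc_ivl)
        finally show ?thesis unfolding m2 .
      qed
      have f1: "f 1 = real (s+2) / a * ((1/2)^(s+1) / a)"
      proof -
        have e1: "q+1-2*1 = s+1" using q by simp
        have e2: "fact q = real (s+2) * (fact (s+1) :: real)" using q by simp
        have "(fact (s+1) :: real) \<noteq> 0" by simp
        then show ?thesis unfolding f_def e1 e2 using a by (simp add: power2_eq_square field_simps del: fact_Suc)
      qed
      have fS: "f (Suc l) = - (real (s+2) * real (s+1) / a^2) * g l" if "l \<in> {1..m}" for l
      proof -
        have "2*l \<le> s+1" using that m_def by auto
        then have e1: "q+1-2*Suc l = s+1-2*l" using q by simp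
        have e2: "fact q = real (s+2) * real (s+1) * (fact s :: real)"
          using q by (simp add: algebra_simps)
        show ?thesis unfolding f_def g_def e1 e2 using a by (simp add: field_simps power2_eq_square)
      qed
      have sums: "(\<Sum>l=1..m. f (Suc l)) = - (real (s+2) * real (s+1) / a^2) * (\<Sum>l=1..m. g l)"
        by (simp add: fS sum_distrib_left)
      have oddq: "odd q \<longleftrightarrow> odd s" using q by simp
      have last: "(if odd q then (-1)^((q+1) div 2) * fact q / a^(q+1) else 0)
          = - (real (s+2) * real (s+1) / a^2) * (if odd s then (-1)^((s+1) div 2) * fact s / a^(s+1) else 0)"
      proof (cases "odd s")
        case True
        then have "(q+1) div 2 = Suc ((s+1) div 2)" using q by auto
        moreover have "fact q = real (s+2) * real (s+1) * (fact s :: real)"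
          using q by (simp add: algebra_simps)
        ultimately show ?thesis using True q a by (simp add: field_simps power2_eq_square)
      next
        case False then show ?thesis using q by simp
      qed
      have "cf a e q = e * (f 1 + (\<Sum>l=1..m. f (Suc l))) + (if odd q then (-1)^((q+1) div 2) * fact q / a^(q+1) else 0)"
        unfolding cf_def f_def[symmetric] sumq[symmetric] ..
      also have "\<dots> = e * f 1 - (real (s+2) * real (s+1) / a^2) * cf a e s"
      proof -
        have cfs: "cf a e s = e * (\<Sum>l=1..m. g l) + (if odd s then (-1)^((s+1) div 2) * fact s / a^(s+1) else 0)"
          unfolding cf_def g_def m_def by simp
        show ?thesis unfolding sums last cfs by (simp add: algebra_simps)
      qed
      also have "\<dots> = fst (cs a e q)" using rec IH f1 by (simp add: field_simps)
      finally show ?thesis by simp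
    qed
  qed
qed



lemma logser:
  fixes r t :: real
  assumes r0: "0 \<le> r" and r1: "r < 1"
  shows "(\<lambda>n. - (r ^ n * cos (real n * t)) / real n) sums (ln (1 - 2 * r * cos t + r^2) / 2)"
proof -
  define w where "w = complex_of_real r * cis t"
  have nw: "cmod w = r" using r0 by (simp add: w_def norm_mult)
  have "cmod (- w) < 1" using nw r1 by simp
  from Ln_series'[OF this] have S: "(\<lambda>n. - (w ^ n) / of_nat n) sums ln (1 - w)" by simp
  have w1: "1 - w \<noteq> 0"
  proof
    assume "1 - w = 0" then have "w = 1" by simp then have "cmod w = 1" by simp
    with nw r1 show False by simp
  qed
  from sums_Re[OF S] have S2: "(\<lambda>n. Re (- (w ^ n) / of_nat n)) sums ln (cmod (1 - w))"
    using w1 by simp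
  have re: "Re (- (w ^ n) / of_nat n) = - (r ^ n * cos (real n * t)) / real n" for n
  proof -
    have "w ^ n = complex_of_real (r ^ n) * cis (real n * t)"
      by (simp add: w_def power_mult_distrib Complex.DeMoivre)
    then show ?thesis by (simp add: Re_divide_of_nat cis.sel)
  qed
  have "(cmod (1 - w))^2 = (1 - r * cos t)^2 + (r * sin t)^2"
    by (simp add: cmod_power2 w_def cis.sel)
  also have "\<dots> = 1 - 2 * r * cos t + r^2"
  proof -
    have gen: "\<And>(u::real) (v::real). (1 - r * u)^2 + (r * v)^2 = 1 - 2 * r * u + r^2 * (v^2 + u^2)"
      by (simp add: power2_eq_square algebra_simps)
    have "(1 - r * cos t)^2 + (r * sin t)^2 = 1 - 2 * r * cos t + r^2 * ((sin t)^2 + (cos t)^2)"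
      by (rule gen)
    then show ?thesis by simp
  qed
  finally have sq: "(cmod (1 - w))^2 = 1 - 2 * r * cos t + r^2" .
  have "ln (cmod (1 - w)) = ln ((cmod (1 - w))^2) / 2"
    using w1 by (simp add: ln_realpow)
  then have E: "ln (cmod (1 - w)) = ln (1 - 2 * r * cos t + r^2) / 2" using sq by simp
  have F: "(\<lambda>n. Re (- (w ^ n) / of_nat n)) = (\<lambda>n. - (r ^ n * cos (real n * t)) / real n)"
    by (rule ext) (rule re)
  from S2 show ?thesis unfolding E F .
qed



lemma fixed_r_integral:
  fixes r :: real and q :: nat
  assumes r0: "0 \<le> r" and r1: "r < 1"
  shows "\<exists>J. ((\<lambda>x. x ^ q * (ln (1 - 2 * r * cos (2 * pi * x) + r^2) / 2)) has_integral J) {0..1/2}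
          \<and> (\<lambda>n. - (r ^ n / real n) * integral {0..1/2} (\<lambda>x. x ^ q * cos (real n * (2 * pi * x)))) sums J"
proof -
  define f where "f n x = (- (r ^ n / real n)) * (x ^ q * cos (real n * (2 * pi * x)))" for n x
  define C where "C n = integral {0..1/2} (\<lambda>x. x ^ q * cos (real n * (2 * pi * x)))" for n
  have bnd: "norm (f n x) \<le> r ^ n" if "x \<in> {0..1/2}" for n x
  proof (cases "n = 0")
    case True then show ?thesis by (simp add: f_def)
  next
    case False
    have x1: "\<bar>x ^ q\<bar> \<le> 1" using that by (simp add: power_le_one)
    have c1: "\<bar>cos (real n * (2 * pi * x))\<bar> \<le> 1" by (rule abs_cos_le_one)
    have n1: "r ^ n / real n \<le> r ^ n / 1" using False r0 by (intro divide_left_mono) auto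
    have "norm (f n x) = \<bar>x ^ q\<bar> * (\<bar>cos (real n * (2 * pi * x))\<bar> * (r ^ n / real n))"
      using r0 by (simp add: f_def abs_mult)
    also have "\<dots> \<le> 1 * (1 * (r ^ n / 1))"
      using x1 c1 n1 r0 by (intro mult_mono) auto
    finally show ?thesis by simp
  qed
  have summ: "summable (\<lambda>n. r ^ n)" using r0 r1 by (intro summable_geometric) simp
  have U: "uniform_limit {0..1/2} (\<lambda>N x. \<Sum>i<N. f i x) (\<lambda>x. suminf (\<lambda>i. f i x)) sequentially"
    by (rule Weierstrass_m_test[OF bnd summ])
  have cont: "continuous_on {0..1/2} (\<lambda>x. \<Sum>i<N. f i x)" for N
    unfolding f_def by (intro continuous_intros)
  obtain I J where I: "\<And>N. ((\<lambda>x. \<Sum>i<N. f i x) has_integral I N) {0..1/2}"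
    and J: "((\<lambda>x. suminf (\<lambda>i. f i x)) has_integral J) {0..1/2}" and IJ: "I \<longlonglongrightarrow> J"
    by (rule uniform_limit_integral[OF U cont]) auto
  have fi: "(f i has_integral (- (r ^ i / real i) * C i)) {0..1/2}" for i
  proof -
    have "(\<lambda>x. x ^ q * cos (real i * (2 * pi * x))) integrable_on {0..1/2}"
      by (intro integrable_continuous_interval continuous_intros)
    then have "((\<lambda>x. x ^ q * cos (real i * (2 * pi * x))) has_integral C i) {0..1/2}"
      unfolding C_def by (rule integrable_integral)
    then have "((\<lambda>x. (- (r ^ i / real i)) * (x ^ q * cos (real i * (2 * pi * x)))) has_integral (- (r ^ i / real i) * C i)) {0..1/2}"
      by (rule has_integral_mult_right)
    then show ?thesis unfolding f_def .
  qed
  have IN: "I N = (\<Sum>i<N. - (r ^ i / real i) * C i)" for N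
  proof -
    have "((\<lambda>x. \<Sum>i<N. f i x) has_integral (\<Sum>i<N. - (r ^ i / real i) * C i)) {0..1/2}"
      using fi by (intro has_integral_sum) auto
    with I[of N] show ?thesis by (rule has_integral_unique)
  qed
  have S: "(\<lambda>i. - (r ^ i / real i) * C i) sums J"
  proof -
    have "I = (\<lambda>N. \<Sum>i<N. - (r ^ i / real i) * C i)" using IN by (rule ext)
    with IJ show ?thesis unfolding sums_def by simp
  qed
  have ptw: "suminf (\<lambda>i. f i x) = x ^ q * (ln (1 - 2 * r * cos (2 * pi * x) + r^2) / 2)" for x
  proof -
    have "(\<lambda>n. x ^ q * (- (r ^ n * cos (real n * (2 * pi * x))) / real n)) sums (x ^ q * (ln (1 - 2 * r * cos (2 * pi * x) + r^2) / 2))"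
      by (rule sums_mult[OF logser[OF r0 r1]])
    moreover have "(\<lambda>n. x ^ q * (- (r ^ n * cos (real n * (2 * pi * x))) / real n)) = (\<lambda>n. f n x)"
      by (auto simp: f_def fun_eq_iff)
    ultimately show ?thesis by (simp add: sums_unique[symmetric])
  qed
  show ?thesis using J S unfolding ptw C_def by blast
qed


lemma ftc_right0:
  fixes H h :: "real \<Rightarrow> real" and b :: real
  assumes b: "0 < b" and lim: "(H \<longlongrightarrow> H 0) (at_right 0)"
    and der: "\<And>x. 0 < x \<Longrightarrow> (H has_real_derivative h x) (at x)"
  shows "(h has_integral (H b - H 0)) {0..b}"
proof (rule fundamental_theorem_of_calculus_interior)
  have ic: "isCont H x" if "0 < x" for x using der[OF that] by (rule DERIV_isCont)
  show "continuous_on {0..b} H"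
  proof (rule continuous_on_IccI)
    show "(H \<longlongrightarrow> H b) (at_left b)" using ic[OF b] by (simp add: isCont_def filterlim_at_split)
    show "H \<midarrow>x\<rightarrow> H x" if "0 < x" "x < b" for x using ic[OF that(1)] by (simp add: isCont_def)
  qed (use lim b in auto)
  show "(H has_vector_derivative h x) (at x)" if "x \<in> {0<..<b}" for x
    using der[of x] that by (simp add: has_real_derivative_iff_has_vector_derivative)
qed (use b in auto)

lemma neg_ln_integrable: "((\<lambda>x. - ln x) has_integral (1/2 + ln 2 / 2)) {0..1/2::real}"
proof -
  have "((\<lambda>x. - ln x) has_integral ((\<lambda>x. x - x * ln x) (1/2) - (\<lambda>x. x - x * ln x) 0)) {0..1/2::real}"
  proof (rule ftc_right0)
    have l1: "((\<lambda>x::real. x * ln x) \<longlongrightarrow> 0) (at_right 0)" by real_asymp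
    have "((\<lambda>x::real. x - x * ln x) \<longlongrightarrow> 0 - 0) (at_right 0)"
      by (intro tendsto_diff l1) (simp add: tendsto_ident_at)
    then show "((\<lambda>x::real. x - x * ln x) \<longlongrightarrow> (\<lambda>x. x - x * ln x) 0) (at_right 0)" by simp
    show "((\<lambda>x. x - x * ln x) has_real_derivative - ln x) (at x)" if "0 < x" for x
      using that by (auto intro!: derivative_eq_intros)
  qed simp
  then show ?thesis by (simp add: ln_div)
qed



lemma sin_ge_half:
  fixes t :: real assumes t0: "0 \<le> t" and t1: "t \<le> pi / 2"
  shows "t / 2 \<le> sin t"
proof -
  have B: "\<bar>sin t - (\<Sum>m<3. sin_coeff m * t ^ m)\<bar> \<le> inverse (fact 3) * \<bar>t\<bar> ^ 3"
    by (rule Maclaurin_sin_bound)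
  have s: "(\<Sum>m<3. sin_coeff m * t ^ m) = t"
    by (simp add: sin_coeff_def eval_nat_numeral)
  have "pi < 3.2" using pi_approx by simp
  have "t^2 \<le> (pi/2)^2" using t0 t1 by (intro power_mono) auto
  also have "(pi/2)^2 \<le> (1.6::real)^2" using \<open>pi < 3.2\<close> pi_gt_zero by (intro power_mono) auto
  finally have t2: "t^2 \<le> 3" by (simp add: power2_eq_square)
  have "\<bar>t\<bar> ^ 3 = t * t^2" using t0 by (simp add: power3_eq_cube power2_eq_square)
  also have "\<dots> \<le> t * 3" using t2 t0 by (intro mult_left_mono) auto
  finally have "inverse (fact 3) * \<bar>t\<bar> ^ 3 \<le> t / 2" by (simp add: eval_nat_numeral)
  with B s show ?thesis by linarith
qed

lemma rho_bounds:
  fixes r x :: real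
  assumes r0: "0 \<le> r" and r1: "r \<le> 1" and x0: "0 < x" and x1: "x \<le> 1/2"
  shows "x^2 \<le> 1 - 2 * r * cos (2 * pi * x) + r^2" and "1 - 2 * r * cos (2 * pi * x) + r^2 \<le> 4"
proof -
  have "- 1 \<le> cos (2 * pi * x)" by simp
  then have "r * (- 1) \<le> r * cos (2 * pi * x)" using r0 by (rule mult_left_mono)
  then have "1 - 2 * r * cos (2 * pi * x) + r^2 \<le> 1 + 2 * r + r^2" by simp
  also have "\<dots> \<le> 4" using r0 r1 power_le_one[of r 2] by simp
  finally show "1 - 2 * r * cos (2 * pi * x) + r^2 \<le> 4" .
  show "x^2 \<le> 1 - 2 * r * cos (2 * pi * x) + r^2"
  proof (cases "x \<le> 1/4")
    case False
    have a1: "pi - 2 * pi * x = pi * (1 - 2 * x)" by (simp add: algebra_simps)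
    have a2: "0 \<le> pi * (1 - 2 * x)" using x1 by simp
    have a3: "pi * (1 - 2 * x) \<le> pi * (1/2)" using False by (intro mult_left_mono) auto
    have "0 \<le> cos (pi - 2 * pi * x)" unfolding a1 using a2 a3 pi_gt_zero by (intro cos_ge_zero) linarith+
    then have c: "cos (2 * pi * x) \<le> 0" by simp
    have "x^2 \<le> 1" using x0 x1 power_le_one[of x 2] by simp
    also have "1 \<le> 1 - 2 * r * cos (2 * pi * x) + r^2"
    proof -
      have "r * cos (2 * pi * x) \<le> 0" using mult_nonneg_nonpos[OF r0 c] .
      moreover have "0 \<le> r^2" by simp
      ultimately show ?thesis by linarith
    qed
    finally show ?thesis .
  next
    case True
    define t where "t = 2 * pi * x"
    have t0: "0 \<le> t" and t1: "t \<le> pi / 2" using x0 True by (auto simp: t_def)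
    have "x \<le> t / 2" using x0 pi_ge_two by (simp add: t_def) 
    also have "\<dots> \<le> sin t" by (rule sin_ge_half[OF t0 t1])
    finally have xs: "x \<le> sin t" .
    have "x^2 \<le> (sin t)^2" using xs x0 by (intro power_mono) auto
    also have "\<dots> \<le> (r - cos t)^2 + (sin t)^2" by simp
    also have "\<dots> = 1 - 2 * r * cos t + r^2 * 1 + ((sin t)^2 + (cos t)^2 - 1)"
      by (simp add: power2_eq_square algebra_simps)
    also have "\<dots> = 1 - 2 * r * cos t + r^2" by simp
    finally show ?thesis by (simp add: t_def)
  qed
qed



lemma ln_sin_moment:
  fixes q :: nat and C :: "nat \<Rightarrow> real"
  assumes Cdef: "\<And>n. C n = integral {0..1/2} (\<lambda>x. x ^ q * cos (real n * (2 * pi * x)))"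
  assumes summ: "summable (\<lambda>n. \<bar>C n / real n\<bar>)"
  shows "(\<lambda>x. x ^ q * ln (2 * sin (pi * x))) integrable_on {0..1/2}"
    and "(\<lambda>n. - (C n / real n)) sums integral {0..1/2} (\<lambda>x. x ^ q * ln (2 * sin (pi * x)))"
proof -
  define r where "r j = 1 - 1 / (real j + 2)" for j :: nat
  have r0: "0 \<le> r j" and r1: "r j < 1" and r1': "r j \<le> 1" for j
    by (auto simp: r_def field_simps)
  have rlim: "r \<longlonglongrightarrow> 1" unfolding r_def by real_asymp
  have "\<forall>j. \<exists>J. ((\<lambda>x. x ^ q * (ln (1 - 2 * r j * cos (2 * pi * x) + (r j)^2) / 2)) has_integral J) {0..1/2}
          \<and> (\<lambda>n. - (r j ^ n / real n) * C n) sums J"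
    using fixed_r_integral[OF r0 r1] by (simp add: Cdef)
  then have "\<exists>JJ. \<forall>j. ((\<lambda>x. x ^ q * (ln (1 - 2 * r j * cos (2 * pi * x) + (r j)^2) / 2)) has_integral JJ j) {0..1/2}
          \<and> (\<lambda>n. - (r j ^ n / real n) * C n) sums JJ j" by (rule choice)
  then obtain JJ where JJ0: "\<forall>j. ((\<lambda>x. x ^ q * (ln (1 - 2 * r j * cos (2 * pi * x) + (r j)^2) / 2)) has_integral JJ j) {0..1/2}
          \<and> (\<lambda>n. - (r j ^ n / real n) * C n) sums JJ j" by blast
  have JJ: "\<And>j. ((\<lambda>x. x ^ q * (ln (1 - 2 * r j * cos (2 * pi * x) + (r j)^2) / 2)) has_integral JJ j) {0..1/2}"
     "\<And>j. (\<lambda>n. - (r j ^ n / real n) * C n) sums JJ j" using JJ0 by auto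
  define f where "f j x = (if x = 0 then 0 else x ^ q * (ln (1 - 2 * r j * cos (2 * pi * x) + (r j)^2) / 2))" for j x
  define g where "g x = x ^ q * ln (2 * sin (pi * x))" for x :: real
  define h where "h x = - ln x" for x :: real
  have fint: "(f j has_integral JJ j) {0..1/2}" for j
    by (rule has_integral_spike_finite[of "{0}", OF _ _ JJ(1)]) (auto simp: f_def)
  have hint: "h integrable_on {0..1/2}" using neg_ln_integrable unfolding h_def by blast
  have le: "norm (f j x) \<le> h x" if "x \<in> {0..1/2}" for j x
  proof (cases "x = 0")
    case True then show ?thesis by (simp add: f_def h_def)
  next
    case False
    then have x0: "0 < x" and x1: "x \<le> 1/2" using that by auto
    define \<rho> where "\<rho> = 1 - 2 * r j * cos (2 * pi * x) + (r j)^2"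
    have b1: "x^2 \<le> \<rho>" and b2: "\<rho> \<le> 4" unfolding \<rho>_def using rho_bounds[OF r0 r1' x0 x1] by auto
    have xp: "0 < x^2" using x0 by simp
    have rp: "0 < \<rho>" using b1 xp by linarith
    have lo: "2 * ln x \<le> ln \<rho>"
    proof -
      have "ln (x^2) \<le> ln \<rho>" using b1 xp rp by simp
      then show ?thesis using x0 by (simp add: ln_realpow)
    qed
    have hi: "ln \<rho> \<le> - 2 * ln x"
    proof -
      have "(2*x)^2 \<le> 1" using x0 x1 power_le_one[of "2*x" 2] by simp
      then have "4 * x^2 \<le> 1" by (simp add: power_mult_distrib)
      then have "4 \<le> 1 / x^2" using xp by (simp add: field_simps)
      then have "\<rho> \<le> 1 / x^2" using b2 by linarith
      then have "ln \<rho> \<le> ln (1 / x^2)" using xp rp by simp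
      then show ?thesis using x0 by (simp add: ln_div ln_realpow)
    qed
    have xq: "\<bar>x ^ q\<bar> \<le> 1" using x0 x1 by (simp add: power_le_one)
    have "norm (f j x) = \<bar>x ^ q\<bar> * \<bar>ln \<rho> / 2\<bar>" using False by (simp add: f_def \<rho>_def abs_mult)
    also have "\<dots> \<le> 1 * \<bar>ln \<rho> / 2\<bar>" using xq by (intro mult_right_mono) auto
    also have "\<dots> \<le> - ln x" using lo hi by (simp add: abs_le_iff)
    finally show ?thesis by (simp add: h_def)
  qed
  have conv: "(\<lambda>j. f j x) \<longlonglongrightarrow> g x" if "x \<in> {0..1/2}" for x
  proof (cases "x = 0")
    case True then show ?thesis by (simp add: f_def g_def)
  next
    case False
    then have x0: "0 < x" and x1: "x \<le> 1/2" using that by auto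
    have sp: "0 < sin (pi * x)" using x0 x1 by (intro sin_gt_zero) auto
    have c2: "cos (2 * pi * x) = 1 - 2 * (sin (pi * x))^2"
      using cos_double_sin[of "pi * x"] by (simp add: mult.assoc)
    have lim1: "1 - 2 * 1 * cos (2 * pi * x) + 1^2 = 4 * (sin (pi * x))^2" using c2 by simp
    have pos: "1 - 2 * 1 * cos (2 * pi * x) + 1^2 \<noteq> 0" using lim1 sp by simp
    have "(\<lambda>j. x ^ q * (ln (1 - 2 * r j * cos (2 * pi * x) + (r j)^2) / 2))
          \<longlonglongrightarrow> x ^ q * (ln (1 - 2 * 1 * cos (2 * pi * x) + 1^2) / 2)"
      by (intro tendsto_intros rlim pos) auto
    moreover have "x ^ q * (ln (1 - 2 * 1 * cos (2 * pi * x) + 1^2) / 2) = g x"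
    proof -
      have "ln (4 * (sin (pi * x))^2) = 2 * ln (2 * sin (pi * x))"
      proof -
        have "4 * (sin (pi * x))^2 = (2 * sin (pi * x))^2" by (simp add: power_mult_distrib)
        moreover have "ln ((2 * sin (pi * x))^2) = 2 * ln (2 * sin (pi * x))"
          using sp by (subst ln_realpow) auto
        ultimately show ?thesis by simp
      qed
      then show ?thesis unfolding lim1 g_def by simp
    qed
    ultimately show ?thesis using False by (simp add: f_def)
  qed
  have DC: "g integrable_on {0..1/2}" "(\<lambda>j. integral {0..1/2} (f j)) \<longlonglongrightarrow> integral {0..1/2} g"
    using dominated_convergence[of f "{0..1/2}" h g] fint hint le conv by (auto simp: has_integral_integrable)
  show "(\<lambda>x. x ^ q * ln (2 * sin (pi * x))) integrable_on {0..1/2}" using DC(1) unfolding g_def .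
  have IJ: "integral {0..1/2} (f j) = JJ j" for j using fint by (rule integral_unique)
  have T: "eventually (\<lambda>j. summable (\<lambda>n. norm (- (r j ^ n / real n) * C n))) sequentially \<and>
           summable (\<lambda>n. norm (- (C n / real n))) \<and>
           ((\<lambda>j. suminf (\<lambda>n. - (r j ^ n / real n) * C n)) \<longlongrightarrow> suminf (\<lambda>n. - (C n / real n))) sequentially"
  proof (rule tannerys_theorem[where M = "\<lambda>n. \<bar>C n / real n\<bar>"])
    show "(\<lambda>j. - (r j ^ n / real n) * C n) \<longlonglongrightarrow> - (C n / real n)" for n
    proof -
      have "(\<lambda>j. - (r j ^ n * (C n / real n))) \<longlonglongrightarrow> - (1 ^ n * (C n / real n))"
        by (intro tendsto_intros rlim)
      moreover have "(\<lambda>j. - (r j ^ n / real n) * C n) = (\<lambda>j. - (r j ^ n * (C n / real n)))"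
        by (auto simp: fun_eq_iff)
      ultimately show ?thesis by simp
    qed
    show "\<forall>\<^sub>F (k, n) in sequentially \<times>\<^sub>F sequentially. norm (- (r n ^ k / real k) * C k) \<le> \<bar>C k / real k\<bar>"
    proof (intro always_eventually allI, clarify)
      fix k n
      have "r n ^ k \<le> 1" using r0 r1' by (simp add: power_le_one)
      moreover have "0 \<le> r n ^ k" using r0 by simp
      ultimately have "\<bar>r n ^ k\<bar> * \<bar>C k / real k\<bar> \<le> 1 * \<bar>C k / real k\<bar>"
        by (intro mult_right_mono) auto
      then show "norm (- (r n ^ k / real k) * C k) \<le> \<bar>C k / real k\<bar>" by (simp add: abs_mult)
    qed
  qed (use summ in auto)
  have S1: "(\<lambda>j. suminf (\<lambda>n. - (r j ^ n / real n) * C n)) = JJ" using JJ(2) by (auto simp: sums_iff fun_eq_iff)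
  have "JJ \<longlonglongrightarrow> suminf (\<lambda>n. - (C n / real n))" using T S1 by simp
  moreover have "JJ \<longlonglongrightarrow> integral {0..1/2} g" using DC(2) IJ by simp
  ultimately have E: "suminf (\<lambda>n. - (C n / real n)) = integral {0..1/2} g" by (rule LIMSEQ_unique)
  have "summable (\<lambda>n. norm (- (C n / real n)))" using T by (rule conjunct1[OF conjunct2])
  then have "summable (\<lambda>n. - (C n / real n))" by (rule summable_norm_cancel)
  then show "(\<lambda>n. - (C n / real n)) sums integral {0..1/2} (\<lambda>x. x ^ q * ln (2 * sin (pi * x)))"
    using E unfolding g_def by (simp add: sums_iff)
qed



lemma zeta_sums:
  assumes s: "2 \<le> s"
  shows "(\<lambda>k. 1 / real (Suc k) ^ s) sums zeta_nat s"
proof -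
  have "summable (\<lambda>n. inverse (real n ^ s))" using inverse_power_summable[OF s] by simp
  then have "summable (\<lambda>n. inverse (real (Suc n) ^ s))" by (subst summable_Suc_iff)
  then have sm: "summable (\<lambda>k. 1 / real (Suc k) ^ s)" by (simp add: inverse_eq_divide)
  have "zeta_nat s = (\<Sum>k. 1 / real (Suc k) ^ s)" using s by (simp add: zeta_nat_def)
  then show ?thesis using sm by (simp add: summable_sums)
qed

lemma eta_sums:
  assumes s: "2 \<le> s"
  shows "(\<lambda>k. (-1) ^ k / real (Suc k) ^ s) sums (zeta_nat s - 2 * zeta_nat s / 2 ^ s)"
proof -
  define a where "a k = 1 / real (Suc k) ^ s" for k
  define d where "d k = a k - (-1) ^ k / real (Suc k) ^ s" for k
  have A: "a sums zeta_nat s" unfolding a_def by (rule zeta_sums[OF s])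
  have "(\<lambda>j. (2 / 2 ^ s) * (1 / real (Suc j) ^ s)) sums ((2 / 2 ^ s) * zeta_nat s)"
    by (rule sums_mult[OF zeta_sums[OF s]])
  moreover have "(\<lambda>j. d (2 * j + 1)) = (\<lambda>j. (2 / 2 ^ s) * (1 / real (Suc j) ^ s))"
  proof
    fix j
    have "real (Suc (2 * j + 1)) = 2 * real (Suc j)" by simp
    then have e1: "real (Suc (2 * j + 1)) ^ s = 2 ^ s * real (Suc j) ^ s"
      by (simp only: power_mult_distrib)
    have "d (2 * j + 1) = 2 / real (Suc (2 * j + 1)) ^ s" by (simp add: d_def a_def diff_divide_distrib[symmetric])
    also have "\<dots> = (2 / 2 ^ s) * (1 / real (Suc j) ^ s)" unfolding e1 by simp
    finally show "d (2 * j + 1) = (2 / 2 ^ s) * (1 / real (Suc j) ^ s)" .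
  qed
  ultimately have D1: "(\<lambda>j. d (2 * j + 1)) sums ((2 / 2 ^ s) * zeta_nat s)" by simp
  have D: "d sums ((2 / 2 ^ s) * zeta_nat s)"
  proof (rule sums_mono_reindex[where g = "\<lambda>j. 2 * j + 1", THEN iffD1])
    show "strict_mono (\<lambda>j::nat. 2 * j + 1)" by (rule strict_monoI) simp
    show "d n = 0" if "n \<notin> range (\<lambda>j. 2 * j + 1)" for n
    proof -
      have "even n"
      proof (rule ccontr)
        assume "odd n"
        then have "n = 2 * (n div 2) + 1" by simp
        then have "n \<in> range (\<lambda>j. 2 * j + 1)" by blast
        with that show False by simp
      qed
      then show ?thesis by (simp add: d_def a_def)
    qed
  qed (use D1 in simp)
  have "(\<lambda>k. a k - d k) sums (zeta_nat s - (2 / 2 ^ s) * zeta_nat s)" by (rule sums_diff[OF A D])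
  then show ?thesis by (simp add: d_def)
qed

lemma C_closed:
  assumes n: "1 \<le> n"
  shows "integral {0..1/2} (\<lambda>x. x ^ q * cos (real n * (2 * pi * x))) = cf (2 * pi * real n) ((-1) ^ n) q"
proof -
  have a: "2 * pi * real n \<noteq> 0" using n by simp
  have s: "sin (2 * pi * real n / 2) = 0" by (simp add: mult.commute[of pi])
  have c: "cos (2 * pi * real n / 2) = (-1) ^ n" by (simp add: mult.commute[of pi])
  have "((\<lambda>x. x ^ q * cos ((2 * pi * real n) * x)) has_integral fst (cs (2 * pi * real n) ((-1) ^ n) q)) {0..1/2}"
    using mom_integrals[OF a s c] by blast
  moreover have "(\<lambda>x. x ^ q * cos ((2 * pi * real n) * x)) = (\<lambda>x. x ^ q * cos (real n * (2 * pi * x)))"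
    by (auto simp: fun_eq_iff mult_ac)
  ultimately have "((\<lambda>x. x ^ q * cos (real n * (2 * pi * x))) has_integral cf (2 * pi * real n) ((-1) ^ n) q) {0..1/2}"
    using cs_closed[OF a] by simp
  then show ?thesis by (rule integral_unique)
qed



lemma D_closed:
  fixes p k :: nat
  assumes p: "1 \<le> p"
  shows "real p * 2 ^ p * (cf (2 * pi * real (Suc k)) ((-1) ^ Suc k) (p - 1) / real (Suc k))
    = (\<Sum>l=1..p div 2. (fact p * (-1) ^ l * 4 ^ l / (fact (p - 2*l) * (2*pi) ^ (2*l))) * ((-1) ^ k / real (Suc k) ^ (2*l+1)))
      + (if even p then fact p * (-1) ^ (p div 2) / pi ^ p else 0) * (1 / real (Suc k) ^ (p+1))"
proof -
  define N where "N = real (Suc k)"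
  have N0: "N > 0" by (simp add: N_def)
  have q1: "p - 1 + 1 = p" using p by simp
  have fp: "(fact p :: real) = real p * fact (p - 1)" using p by (simp add: fact_reduce)
  have tm: "real p * 2 ^ p / N * ((-1) ^ Suc k * ((-1)^(l+1) * fact (p-1) / fact (p-2*l) * (1/2)^(p-2*l) / (2 * pi * N)^(2*l)))
      = (fact p * (-1) ^ l * 4 ^ l / (fact (p - 2*l) * (2*pi) ^ (2*l))) * ((-1) ^ k / N ^ (2*l+1))"
    if "l \<in> {1..p div 2}" for l
  proof -
    have l2: "2 * l \<le> p" using that by auto
    have f4: "(4::real)^l = 2^(2*l)" by (simp add: power_mult)
    have "(2::real)^(p-2*l) * 2^(2*l) = 2^p" using l2 by (simp add: power_add[symmetric])
    then have pw: "(2::real) ^ p = 2 ^ (p - 2*l) * 4 ^ l" using f4 by simp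
    have h: "(2::real) ^ (p - 2*l) * (1/2) ^ (p - 2*l) = 1" by (simp add: power_mult_distrib[symmetric])
    have Q: "(2::real) ^ p * (1/2) ^ (p - 2*l) = 4 ^ l" using pw h by (simp add: mult_ac)
    have S: "(-1::real) ^ Suc k * (-1) ^ (l+1) = (-1) ^ l * (-1) ^ k" by (simp add: power_add)
    have gen: "p * A / N * (s1 * (s2 * F1 / F2 * h / (P * M))) = (p * F1 * s3 * Q / (F2 * P)) * (s4 / (M * N))"
      if "A * h = Q" "s1 * s2 = s3 * s4" "N \<noteq> 0" "F2 \<noteq> 0" "P \<noteq> 0" "M \<noteq> 0"
      for A h Q s1 s2 s3 s4 F1 F2 P M N p :: real
    proof -
      have "p * A / N * (s1 * (s2 * F1 / F2 * h / (P * M))) = p * F1 * (s1 * s2) * (A * h) / (N * F2 * P * M)"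
        using that by (simp add: field_simps)
      also have "\<dots> = (p * F1 * s3 * Q / (F2 * P)) * (s4 / (M * N))"
        using that by (simp add: field_simps)
      finally show ?thesis .
    qed
    have e1: "(2 * pi * N) ^ (2*l) = (2*pi)^(2*l) * N^(2*l)" by (simp add: power_mult_distrib)
    have e2: "N ^ (2*l+1) = N^(2*l) * N" by simp
    show ?thesis unfolding e1 e2 fp
      by (rule gen[OF Q S]) (use N0 in auto)
  qed
  define e :: real where "e = (-1) ^ Suc k"
  define g where "g l = (-1)^(l+1) * fact (p-1) / fact (p-2*l) * (1/2)^(p-2*l) / (2 * pi * N)^(2*l)" for l :: nat
  have cfe: "cf (2 * pi * N) e (p - 1) = e * (\<Sum>l=1..p div 2. g l)
      + (if even p then (-1)^(p div 2) * fact (p-1) / (2 * pi * N)^p else 0)"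
  proof -
    have o: "odd (p - 1) \<longleftrightarrow> even p" using p by (cases p) auto
    show ?thesis unfolding cf_def q1 g_def o by (simp add: Suc_diff_le)
  qed
  have part1: "real p * 2 ^ p / N * (e * (\<Sum>l=1..p div 2. g l)) =
      (\<Sum>l=1..p div 2. (fact p * (-1) ^ l * 4 ^ l / (fact (p - 2*l) * (2*pi) ^ (2*l))) * ((-1) ^ k / N ^ (2*l+1)))"
    unfolding sum_distrib_left using tm by (intro sum.cong) (auto simp: e_def g_def)
  have part2: "real p * 2 ^ p / N * (if even p then (-1)^(p div 2) * fact (p-1) / (2 * pi * N)^p else 0)
      = (if even p then fact p * (-1) ^ (p div 2) / pi ^ p else 0) * (1 / N ^ (p+1))"
  proof (cases "even p")
    case True
    have gen: "pp * T / N * (s * F1 / (T * P * M)) = (pp * F1 * s / P) * (1 / (M * N))"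
      if "N \<noteq> 0" "T \<noteq> 0" "P \<noteq> 0" "M \<noteq> 0" for pp T N s F1 P M :: real
      using that by (simp add: field_simps)
    have e1: "(2 * pi * N) ^ p = 2 ^ p * pi ^ p * N ^ p" by (simp add: power_mult_distrib)
    have e2: "N ^ (p+1) = N ^ p * N" by simp
    show ?thesis using True unfolding e1 e2 fp by (simp only: if_True) (rule gen, use N0 in auto)
  qed simp
  have split: "c * ((X + Y) / N) = c / N * X + c / N * Y" for c X Y :: real
    using N0 by (simp add: field_simps)
  have "real p * 2 ^ p * (cf (2 * pi * N) e (p - 1) / N) =
        real p * 2 ^ p / N * (e * (\<Sum>l=1..p div 2. g l))
      + real p * 2 ^ p / N * (if even p then (-1)^(p div 2) * fact (p-1) / (2 * pi * N)^p else 0)"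
    unfolding cfe by (rule split)
  also have "\<dots> = (\<Sum>l=1..p div 2. (fact p * (-1) ^ l * 4 ^ l / (fact (p - 2*l) * (2*pi) ^ (2*l))) * ((-1) ^ k / N ^ (2*l+1)))
      + (if even p then fact p * (-1) ^ (p div 2) / pi ^ p else 0) * (1 / N ^ (p+1))"
    by (simp only: part1 part2)
  finally show ?thesis unfolding N_def e_def .
qed



lemma k_side:
  fixes p :: nat
  assumes p: "1 \<le> p"
  defines "C \<equiv> \<lambda>n. integral {0..1/2} (\<lambda>x. x ^ (p - 1) * cos (real n * (2 * pi * x)))"
  shows "summable (\<lambda>n. \<bar>C n / real n\<bar>)"
    and "(\<lambda>n. real p * 2 ^ p * (C n / real n)) sums
          ((\<Sum>l = 1..p div 2. fact p * (-1) ^ l * (4 ^ l - 1) * zeta_nat (2 * l + 1)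
                                 / (fact (p - 2 * l) * (2 * pi) ^ (2 * l)))
           + (if even p then fact p * (-1) ^ (p div 2) * zeta_nat (p + 1) / pi ^ p else 0))"
proof -
  define \<alpha> where "\<alpha> l = fact p * (-1) ^ l * 4 ^ l / (fact (p - 2*l) * (2*pi) ^ (2*l))" for l :: nat
  define \<beta> :: real where "\<beta> = (if even p then fact p * (-1) ^ (p div 2) / pi ^ p else 0)"
  define G where "G k = (\<Sum>l=1..p div 2. \<alpha> l * ((-1) ^ k / real (Suc k) ^ (2*l+1))) + \<beta> * (1 / real (Suc k) ^ (p+1))" for k
  have CS: "real p * 2 ^ p * (C (Suc k) / real (Suc k)) = G k" for k
  proof -
    have "C (Suc k) = cf (2 * pi * real (Suc k)) ((-1) ^ Suc k) (p - 1)"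
      unfolding C_def by (rule C_closed) simp
    then show ?thesis using D_closed[OF p, of k] by (simp add: G_def \<alpha>_def \<beta>_def)
  qed
  have GS: "G sums ((\<Sum>l=1..p div 2. \<alpha> l * (zeta_nat (2*l+1) - 2 * zeta_nat (2*l+1) / 2 ^ (2*l+1))) + \<beta> * zeta_nat (p+1))"
    unfolding G_def
  proof (intro sums_add sums_sum sums_mult)
    show "(\<lambda>k. (-1) ^ k / real (Suc k) ^ (2*l+1)) sums (zeta_nat (2*l+1) - 2 * zeta_nat (2*l+1) / 2 ^ (2*l+1))"
      if "l \<in> {1..p div 2}" for l
      using that by (intro eta_sums) auto
    show "(\<lambda>k. 1 / real (Suc k) ^ (p+1)) sums zeta_nat (p+1)" using p by (intro zeta_sums) auto
  qed
  have val: "(\<Sum>l=1..p div 2. \<alpha> l * (zeta_nat (2*l+1) - 2 * zeta_nat (2*l+1) / 2 ^ (2*l+1))) + \<beta> * zeta_nat (p+1)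
     = (\<Sum>l = 1..p div 2. fact p * (-1) ^ l * (4 ^ l - 1) * zeta_nat (2 * l + 1)
                                 / (fact (p - 2 * l) * (2 * pi) ^ (2 * l)))
           + (if even p then fact p * (-1) ^ (p div 2) * zeta_nat (p + 1) / pi ^ p else 0)"
  proof -
    have "\<alpha> l * (zeta_nat (2*l+1) - 2 * zeta_nat (2*l+1) / 2 ^ (2*l+1)) =
          fact p * (-1) ^ l * (4 ^ l - 1) * zeta_nat (2 * l + 1) / (fact (p - 2 * l) * (2 * pi) ^ (2 * l))" for l
    proof -
      have "(2::real) ^ (2*l+1) = 2 * 4 ^ l" by (simp add: power_mult)
      then have "(4::real) ^ l * (Z - 2 * Z / 2 ^ (2*l+1)) = (4 ^ l - 1) * Z" for Z
        by (simp add: field_simps)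
      then show ?thesis unfolding \<alpha>_def by (simp add: field_simps)
    qed
    then show ?thesis by (simp add: \<beta>_def)
  qed
  have S0: "(\<lambda>k. real p * 2 ^ p * (C (Suc k) / real (Suc k))) sums
          ((\<Sum>l = 1..p div 2. fact p * (-1) ^ l * (4 ^ l - 1) * zeta_nat (2 * l + 1)
                                 / (fact (p - 2 * l) * (2 * pi) ^ (2 * l)))
           + (if even p then fact p * (-1) ^ (p div 2) * zeta_nat (p + 1) / pi ^ p else 0))"
    unfolding CS val[symmetric] by (rule GS)
  then show "(\<lambda>n. real p * 2 ^ p * (C n / real n)) sums
          ((\<Sum>l = 1..p div 2. fact p * (-1) ^ l * (4 ^ l - 1) * zeta_nat (2 * l + 1)
                                 / (fact (p - 2 * l) * (2 * pi) ^ (2 * l)))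
           + (if even p then fact p * (-1) ^ (p div 2) * zeta_nat (p + 1) / pi ^ p else 0))"
    by (subst (asm) sums_Suc_iff) simp
  define H where "H k = (\<Sum>l=1..p div 2. \<bar>\<alpha> l\<bar> * (1 / real (Suc k) ^ (2*l+1))) + \<bar>\<beta>\<bar> * (1 / real (Suc k) ^ (p+1))" for k
  have HS: "summable H" unfolding H_def
  proof (intro summable_add summable_sum summable_mult)
    show "summable (\<lambda>k. 1 / real (Suc k) ^ (2*l+1))" if "l \<in> {1..p div 2}" for l
      using that by (intro sums_summable[OF zeta_sums]) auto
    show "summable (\<lambda>k. 1 / real (Suc k) ^ (p+1))" using p by (intro sums_summable[OF zeta_sums]) auto
  qed
  have GH: "\<bar>G k\<bar> \<le> H k" for k
  proof -
    have "\<bar>G k\<bar> \<le> \<bar>\<Sum>l=1..p div 2. \<alpha> l * ((-1) ^ k / real (Suc k) ^ (2*l+1))\<bar> + \<bar>\<beta> * (1 / real (Suc k) ^ (p+1))\<bar>"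
      unfolding G_def by (rule abs_triangle_ineq)
    also have "\<dots> \<le> (\<Sum>l=1..p div 2. \<bar>\<alpha> l * ((-1) ^ k / real (Suc k) ^ (2*l+1))\<bar>) + \<bar>\<beta> * (1 / real (Suc k) ^ (p+1))\<bar>"
      by (intro add_right_mono sum_abs)
    also have "\<dots> = H k" unfolding H_def by (simp add: abs_mult)
    finally show ?thesis .
  qed
  have pp: "0 < real p * 2 ^ p" using p by simp
  have "summable (\<lambda>k. H k / (real p * 2 ^ p))" using HS by (rule summable_divide)
  moreover have "norm (\<bar>C (Suc k) / real (Suc k)\<bar>) \<le> H k / (real p * 2 ^ p)" for k
  proof -
    have ab: "X = Gk / c" if "c * X = Gk" "0 < c" for c X Gk :: real using that by (simp add: field_simps)
    have "C (Suc k) / real (Suc k) = G k / (real p * 2 ^ p)" by (rule ab[OF CS[of k] pp])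
    then show ?thesis using GH[of k] pp by (simp add: divide_right_mono)
  qed
  ultimately have "summable (\<lambda>k. \<bar>C (Suc k) / real (Suc k)\<bar>)" by (rule summable_comparison_test'[where N = 0])
  then show "summable (\<lambda>n. \<bar>C n / real n\<bar>)" by (subst (asm) summable_Suc_iff)
qed



lemma logsin_series:
  fixes x :: real
  assumes x0: "0 < x" and x1: "x < 1"
  shows "(\<lambda>n. zeta_nat (2 * Suc n) * x ^ (2 * Suc n) / real (Suc n)) sums (- ln (sin (pi * x) / (pi * x)))"
proof -
  define u where "u k = x^2 / real (Suc k)^2" for k
  have u0: "0 \<le> u k" and u1: "u k < 1" for k
  proof -
    show "0 \<le> u k" by (simp add: u_def)
    have "x^2 < 1" using x0 x1 by (simp add: power_less_one_iff abs_less_iff)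
    moreover have "1 \<le> real (Suc k)^2" by simp
    ultimately have "x^2 < real (Suc k)^2" by linarith
    then show "u k < 1" by (simp add: u_def divide_less_eq del: of_nat_Suc)
  qed
  define f where "f = (\<lambda>(k, n). u k ^ Suc n / real (Suc n))"
  define g where "g k = - ln (1 - u k)" for k
  have inner: "((\<lambda>n. f (k, n)) has_sum g k) UNIV" for k
  proof -
    have "\<bar>- u k\<bar> < 1" using u0 u1 by simp
    from ln_series'[OF this] have "(\<lambda>n. - ((u k) ^ n) / real n) sums ln (1 - u k)" by simp
    then have "(\<lambda>n. - ((u k) ^ Suc n) / real (Suc n)) sums ln (1 - u k)" by (subst sums_Suc_iff) simp
    then have "(\<lambda>n. - (- ((u k) ^ Suc n) / real (Suc n))) sums (- ln (1 - u k))" by (rule sums_minus)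
    then have "(\<lambda>n. f (k, n)) sums g k" by (simp add: f_def g_def)
    then show ?thesis by (rule sums_nonneg_imp_has_sum) (simp add: f_def u0)
  qed
  have gnn: "0 \<le> g k" for k using u0 u1 by (simp add: g_def)
  have sp: "0 < sin (pi * x) / (pi * x)" using x0 x1 by (intro divide_pos_pos sin_gt_zero) auto
  have outer: "g sums (- ln (sin (pi * x) / (pi * x)))"
  proof -
    have P: "(\<lambda>n. \<Prod>k=1..n. 1 - x^2 / of_nat k^2) \<longlonglongrightarrow> sin (pi * x) / (pi * x)"
      using sin_product_formula_real'[of x] x0 by simp
    have "(\<lambda>n. - ln (\<Prod>k=1..n. 1 - x^2 / of_nat k^2)) \<longlonglongrightarrow> - ln (sin (pi * x) / (pi * x))"
      using sp by (intro tendsto_intros P) auto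
    moreover have "- ln (\<Prod>k=1..n. 1 - x^2 / of_nat k^2) = (\<Sum>k<n. g k)" for n
    proof -
      have "(\<Prod>k=1..n. 1 - x^2 / of_nat k^2) = (\<Prod>k<n. 1 - u k)"
        by (simp add: u_def prod.atLeast1_atMost_eq)
      moreover have "ln (\<Prod>k<n. 1 - u k) = (\<Sum>k<n. ln (1 - u k))"
        using u1 by (intro ln_prod) (auto simp: less_imp_neq)
      ultimately show ?thesis by (simp add: g_def sum_negf)
    qed
    ultimately show ?thesis by (simp add: sums_def)
  qed
  have gh: "(g has_sum (- ln (sin (pi * x) / (pi * x)))) UNIV"
    by (rule sums_nonneg_imp_has_sum[OF outer gnn])
  have fs: "f summable_on Sigma UNIV (\<lambda>_. UNIV)"
    by (rule summable_on_SigmaI[where g = g]) (use inner gh in \<open>auto simp: f_def u0 summable_on_def\<close>)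
  have fh: "(f has_sum (- ln (sin (pi * x) / (pi * x)))) (Sigma UNIV (\<lambda>_. UNIV))"
    by (rule has_sum_SigmaI[OF _ gh fs]) (use inner in auto)
  then have fh2: "((\<lambda>(n, k). f (k, n)) has_sum (- ln (sin (pi * x) / (pi * x)))) (UNIV \<times> UNIV)"
    by (subst has_sum_swap[symmetric]) simp
  have inner2: "((\<lambda>k. (\<lambda>(n, k). f (k, n)) (n, k)) has_sum (zeta_nat (2 * Suc n) * x ^ (2 * Suc n) / real (Suc n))) UNIV" for n
  proof -
    have "(\<lambda>k. 1 / real (Suc k) ^ (2 * Suc n)) sums zeta_nat (2 * Suc n)" by (rule zeta_sums) simp
    then have "(\<lambda>k. (x ^ (2 * Suc n) / real (Suc n)) * (1 / real (Suc k) ^ (2 * Suc n))) sums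
        ((x ^ (2 * Suc n) / real (Suc n)) * zeta_nat (2 * Suc n))" by (rule sums_mult)
    moreover have "(\<lambda>k. (x ^ (2 * Suc n) / real (Suc n)) * (1 / real (Suc k) ^ (2 * Suc n))) = (\<lambda>k. f (k, n))"
    proof
      fix k
      have "(x^2 / real (Suc k)^2) ^ Suc n = x ^ (2 * Suc n) / real (Suc k) ^ (2 * Suc n)"
        by (simp only: power_divide power_mult)
      moreover have "f (k, n) = (x^2 / real (Suc k)^2) ^ Suc n / real (Suc n)"
        unfolding f_def u_def by (simp only: prod.case)
      moreover have gen: "(A / B) * (1 / C) = A / C / B" for A B C :: real by simp
      ultimately show "(x ^ (2 * Suc n) / real (Suc n)) * (1 / real (Suc k) ^ (2 * Suc n)) = f (k, n)"
        by (simp only: gen)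
    qed
    ultimately have "(\<lambda>k. f (k, n)) sums (zeta_nat (2 * Suc n) * x ^ (2 * Suc n) / real (Suc n))"
      by (simp add: mult_ac)
    then have "((\<lambda>k. f (k, n)) has_sum (zeta_nat (2 * Suc n) * x ^ (2 * Suc n) / real (Suc n))) UNIV"
      by (rule sums_nonneg_imp_has_sum) (simp add: f_def u0)
    then show ?thesis by simp
  qed
  have "((\<lambda>n. zeta_nat (2 * Suc n) * x ^ (2 * Suc n) / real (Suc n)) has_sum (- ln (sin (pi * x) / (pi * x)))) UNIV"
    by (rule has_sum_SigmaD[OF fh2[unfolded UNIV_Times_UNIV[symmetric]]]) (use inner2 in auto)
  then show ?thesis by (rule has_sum_imp_sums)
qed



lemma power_has_integral:
  fixes b :: real assumes b: "0 \<le> b"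
  shows "((\<lambda>x. x ^ k) has_integral (b ^ Suc k / real (Suc k))) {0..b}"
proof -
  have "((\<lambda>x. x ^ k) has_integral ((\<lambda>x. x ^ Suc k / real (Suc k)) b - (\<lambda>x. x ^ Suc k / real (Suc k)) 0)) {0..b}"
  proof (rule fundamental_theorem_of_calculus[OF b])
    show "((\<lambda>x. x ^ Suc k / real (Suc k)) has_vector_derivative x ^ k) (at x within {0..b})" for x
    proof -
      have "((\<lambda>x. x ^ Suc k / real (Suc k)) has_real_derivative (real (Suc k) * x ^ k / real (Suc k))) (at x within {0..b})"
        using DERIV_pow[of "Suc k" x] by (intro derivative_eq_intros) auto
      then show "((\<lambda>x. x ^ Suc k / real (Suc k)) has_vector_derivative x ^ k) (at x within {0..b})"
        by (simp add: has_real_derivative_iff_has_vector_derivative[symmetric] del: of_nat_Suc)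
    qed
  qed
  then show ?thesis by simp
qed

lemma zeta_even_nonneg: "0 \<le> zeta_nat (2 * Suc n)"
proof -
  have "(\<lambda>k. 1 / real (Suc k) ^ (2 * Suc n)) sums zeta_nat (2 * Suc n)" by (rule zeta_sums) simp
  then have "zeta_nat (2 * Suc n) = (\<Sum>k. 1 / real (Suc k) ^ (2 * Suc n))" by (rule sums_unique)
  also have "0 \<le> \<dots>" by (intro suminf_nonneg sums_summable[OF \<open>_ sums _\<close>]) auto
  finally show ?thesis by simp
qed

lemma m_side_integral:
  fixes p :: nat
  assumes p: "1 \<le> p"
  shows "((\<lambda>x. x ^ (p - 1) * (- ln (sin (pi * x) / (pi * x)))) has_integral
          (\<Sum>n. zeta_nat (2 * Suc n) * (1/2) ^ (2 * Suc n + p) / (real (Suc n) * real (2 * Suc n + p)))) {0..1/2}"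
proof -
  define q where "q = p - 1"
  define t where "t n x = zeta_nat (2 * Suc n) * x ^ (2 * Suc n) / real (Suc n)" for n and x :: real
  define a where "a n = zeta_nat (2 * Suc n) * (1/2) ^ (2 * Suc n + p) / (real (Suc n) * real (2 * Suc n + p))" for n
  define f where "f N x = (\<Sum>n<N. x ^ q * t n x)" for N and x :: real
  define g where "g x = x ^ q * (- ln (sin (pi * x) / (pi * x)))" for x :: real
  have ti: "((\<lambda>x. x ^ q * t n x) has_integral a n) {0..1/2}" for n
  proof -
    have "((\<lambda>x. x ^ (2 * Suc n + q)) has_integral ((1/2) ^ Suc (2 * Suc n + q) / real (Suc (2 * Suc n + q)))) {0..1/2}"
      by (rule power_has_integral) simp
    then have "((\<lambda>x. (zeta_nat (2 * Suc n) / real (Suc n)) * x ^ (2 * Suc n + q)) has_integral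
        (zeta_nat (2 * Suc n) / real (Suc n)) * ((1/2) ^ Suc (2 * Suc n + q) / real (Suc (2 * Suc n + q)))) {0..1/2}"
      by (rule has_integral_mult_right)
    moreover have e: "Suc (2 * Suc n + q) = 2 * Suc n + p" using p by (simp add: q_def)
    moreover have "(\<lambda>x. (zeta_nat (2 * Suc n) / real (Suc n)) * x ^ (2 * Suc n + q)) = (\<lambda>x. x ^ q * t n x)"
      by (auto simp: fun_eq_iff t_def power_add)
    moreover have "(zeta_nat (2 * Suc n) / real (Suc n)) * ((1/2) ^ (2 * Suc n + p) / real (2 * Suc n + p)) = a n"
      unfolding a_def by (rule times_divide_times_eq)
    ultimately show ?thesis by (simp only: e)
  qed
  have fi: "(f N has_integral (\<Sum>n<N. a n)) {0..1/2}" for N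
    unfolding f_def[abs_def] by (intro has_integral_sum ti) auto
  have tnn: "0 \<le> x ^ q * t n x" if "0 \<le> x" for n x
    using that zeta_even_nonneg[of n] by (simp add: t_def)
  have mono: "f N x \<le> f (Suc N) x" if "x \<in> {0..1/2}" for N x
    using tnn[of x N] that by (simp add: f_def)
  have conv: "(\<lambda>N. f N x) \<longlonglongrightarrow> g x" if "x \<in> {0..1/2}" for x
  proof (cases "x = 0")
    case True
    then show ?thesis by (simp add: f_def g_def t_def)
  next
    case False
    then have x0: "0 < x" and x1: "x < 1" using that by auto
    have "(\<lambda>n. x ^ q * t n x) sums (x ^ q * (- ln (sin (pi * x) / (pi * x))))"
      unfolding t_def by (rule sums_mult[OF logsin_series[OF x0 x1]])
    then show ?thesis by (simp add: sums_def f_def g_def)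
  qed
  have asum: "summable a"
  proof (rule summable_comparison_test'[where N = 0])
    have "(1/2::real) < 1" by simp
    show "summable (\<lambda>n. zeta_nat (2 * Suc n) * (1/2) ^ (2 * Suc n) / real (Suc n))"
      using logsin_series[of "1/2"] by (simp add: sums_summable)
    show "norm (a n) \<le> zeta_nat (2 * Suc n) * (1/2) ^ (2 * Suc n) / real (Suc n)" for n
    proof -
      have z: "0 \<le> zeta_nat (2 * Suc n)" by (rule zeta_even_nonneg)
      have pw: "(1/2::real) ^ (2 * Suc n + p) \<le> (1/2) ^ (2 * Suc n)"
        by (rule power_decreasing) auto
      have "(1/2::real) ^ (2 * Suc n + p) / real (2 * Suc n + p) \<le> (1/2) ^ (2 * Suc n)"
      proof -
        have "(1/2::real) ^ (2 * Suc n + p) / real (2 * Suc n + p) \<le> (1/2::real) ^ (2 * Suc n + p) / 1"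
          by (rule divide_left_mono) auto
        then have "(1/2::real) ^ (2 * Suc n + p) / real (2 * Suc n + p) \<le> (1/2::real) ^ (2 * Suc n + p)"
          by (simp only: div_by_1)
        then show ?thesis using pw by (rule order_trans)
      qed
      then have "zeta_nat (2 * Suc n) * ((1/2::real) ^ (2 * Suc n + p) / real (2 * Suc n + p)) / real (Suc n)
                 \<le> zeta_nat (2 * Suc n) * (1/2) ^ (2 * Suc n) / real (Suc n)"
        using z by (intro divide_right_mono mult_left_mono) auto
      moreover have "0 \<le> a n" using z by (simp add: a_def)
      ultimately show ?thesis by (simp add: a_def field_simps)
    qed
  qed
  have bnd: "bounded (range (\<lambda>N. integral {0..1/2} (f N)))"
  proof -
    have "(\<lambda>N. integral {0..1/2} (f N)) = (\<lambda>N. \<Sum>n<N. a n)" using fi by (auto simp: integral_unique)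
    moreover have "(\<lambda>N. \<Sum>n<N. a n) \<longlonglongrightarrow> suminf a" using asum by (simp add: summable_LIMSEQ)
    ultimately show ?thesis by (metis convergent_imp_bounded)
  qed
  have MC: "g integrable_on {0..1/2} \<and> (\<lambda>N. integral {0..1/2} (f N)) \<longlonglongrightarrow> integral {0..1/2} g"
    by (rule monotone_convergence_increasing[OF _ mono conv bnd]) (use fi in auto)
  have "(\<lambda>N. integral {0..1/2} (f N)) = (\<lambda>N. \<Sum>n<N. a n)" using fi by (auto simp: integral_unique)
  with MC have "(\<lambda>N. \<Sum>n<N. a n) \<longlonglongrightarrow> integral {0..1/2} g" by simp
  moreover have "(\<lambda>N. \<Sum>n<N. a n) \<longlonglongrightarrow> suminf a" using asum by (simp add: summable_LIMSEQ)
  ultimately have "integral {0..1/2} g = suminf a" by (rule LIMSEQ_unique)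
  with MC have "(g has_integral suminf a) {0..1/2}" by (metis has_integral_integral)
  moreover have "g = (\<lambda>x. x ^ (p - 1) * (- ln (sin (pi * x) / (pi * x))))"
    by (rule ext) (simp only: g_def q_def)
  moreover have "a = (\<lambda>n. zeta_nat (2 * Suc n) * (1/2) ^ (2 * Suc n + p) / (real (Suc n) * real (2 * Suc n + p)))"
    by (rule ext) (simp only: a_def)
  ultimately show ?thesis by simp
qed



lemma log_moment:
  fixes p :: nat assumes p: "1 \<le> p"
  shows "((\<lambda>x. x ^ (p - 1) * ln (2 * pi * x)) has_integral ((1/2)^p / real p * ln pi - (1/2)^p / (real p)^2)) {0..1/2}"
proof -
  define H where "H x = x ^ p / real p * ln (2 * pi * x) - x ^ p / (real p)^2" for x :: real
  have pp: "0 < real p" using p by simp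
  have xp: "x ^ p = x * x ^ (p - 1)" for x :: real using p by (cases p) auto
  have H0: "H 0 = 0" using p by (simp add: H_def)
  have "((\<lambda>x. x ^ (p - 1) * ((x * ln (2 * pi * x)) / real p) - x * x ^ (p - 1) / (real p)^2) \<longlongrightarrow>
        0 ^ (p - 1) * (0 / real p) - 0 * 0 ^ (p - 1) / (real p)^2) (at_right 0)"
  proof (intro tendsto_intros)
    show "((\<lambda>x::real. x * ln (2 * pi * x)) \<longlongrightarrow> 0) (at_right 0)" by real_asymp
  qed (use pp in \<open>auto simp: tendsto_ident_at\<close>)
  moreover have "(\<lambda>x. x ^ (p - 1) * ((x * ln (2 * pi * x)) / real p) - x * x ^ (p - 1) / (real p)^2) = H"
    by (rule ext) (simp add: H_def xp)
  ultimately have lim: "(H \<longlongrightarrow> H 0) (at_right 0)" using H0 by simp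
  have der: "(H has_real_derivative x ^ (p - 1) * ln (2 * pi * x)) (at x)" if x0: "0 < x" for x
  proof -
    have d1: "((\<lambda>x. x ^ p) has_real_derivative real p * x ^ (p - 1)) (at x)" using DERIV_pow[of p x] by simp
    have d2: "((\<lambda>x. ln (2 * pi * x)) has_real_derivative 1 / x) (at x)"
      using x0 by (auto intro!: derivative_eq_intros simp: field_simps)
    have d3: "((\<lambda>x. x ^ p / real p) has_real_derivative real p * x ^ (p - 1) / real p) (at x)"
      by (rule DERIV_cdivide[OF d1])
    have d4: "((\<lambda>x. x ^ p / (real p)^2) has_real_derivative real p * x ^ (p - 1) / (real p)^2) (at x)"
      by (rule DERIV_cdivide[OF d1])
    have "((\<lambda>x. x ^ p / real p * ln (2 * pi * x) - x ^ p / (real p)^2) has_real_derivative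
           (real p * x ^ (p - 1) / real p * ln (2 * pi * x) + 1 / x * (x ^ p / real p)
            - real p * x ^ (p - 1) / (real p)^2)) (at x)"
      by (intro DERIV_diff DERIV_mult d3 d2 d4)
    moreover have "real p * x ^ (p - 1) / real p * ln (2 * pi * x) + 1 / x * (x ^ p / real p)
            - real p * x ^ (p - 1) / (real p)^2 = x ^ (p - 1) * ln (2 * pi * x)"
      using pp x0 unfolding xp by (simp add: field_simps power2_eq_square)
    ultimately show ?thesis unfolding H_def[abs_def] by (rule DERIV_cong)
  qed
  have "((\<lambda>x. x ^ (p - 1) * ln (2 * pi * x)) has_integral (H (1/2) - H 0)) {0..1/2}"
    by (rule ftc_right0[OF _ lim der]) auto
  moreover have "H (1/2) - H 0 = (1/2)^p / real p * ln pi - (1/2)^p / (real p)^2"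
    using H0 by (simp add: H_def)
  ultimately show ?thesis by simp
qed



theorem lemma2p6:
  fixes p :: nat
  assumes "p \<ge> 1"
  shows "- 2 * (\<Sum>n. zeta_nat (2 * n) / (real (2 * n + p) * 2 ^ (2 * n)))
         = ln 2
           + (\<Sum>k = 1..p div 2. fact p * (-1) ^ k * (4 ^ k - 1) * zeta_nat (2 * k + 1)
                                 / (fact (p - 2 * k) * (2 * pi) ^ (2 * k)))
           + (if even p then fact p * (-1) ^ (p div 2) * zeta_nat (p + 1) / pi ^ p else 0)"
proof -
  have p: "1 \<le> p" using assms .
  have pp: "0 < real p" using p by simp
  define R where "R = (\<Sum>k = 1..p div 2. fact p * (-1) ^ k * (4 ^ k - 1) * zeta_nat (2 * k + 1)
                                 / (fact (p - 2 * k) * (2 * pi) ^ (2 * k)))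
           + (if even p then fact p * (-1) ^ (p div 2) * zeta_nat (p + 1) / pi ^ p else 0)"
  define C where "C = (\<lambda>n. integral {0..1/2} (\<lambda>x. x ^ (p - 1) * cos (real n * (2 * pi * x))))"
  define K where "K = integral {0..1/2} (\<lambda>x. x ^ (p - 1) * ln (2 * sin (pi * x)))"
  define B where "B = (\<Sum>n. zeta_nat (2 * Suc n) * (1/2) ^ (2 * Suc n + p) / (real (Suc n) * real (2 * Suc n + p)))"
  define L where "L = (1/2)^p / real p * ln pi - (1/2)^p / (real p)^2"
  define A where "A = (\<Sum>n. zeta_nat (2 * Suc n) * (1/2) ^ (2 * Suc n) / real (Suc n))"
  have ks1: "summable (\<lambda>n. \<bar>C n / real n\<bar>)" unfolding C_def by (rule k_side(1)[OF p])
  have ks2: "(\<lambda>n. real p * 2 ^ p * (C n / real n)) sums R" unfolding C_def R_def by (rule k_side(2)[OF p])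
  have Kint: "(\<lambda>x. x ^ (p - 1) * ln (2 * sin (pi * x))) integrable_on {0..1/2}"
    by (rule ln_sin_moment(1)[OF _ ks1]) (simp add: C_def)
  have Ks: "(\<lambda>n. - (C n / real n)) sums K"
    unfolding K_def by (rule ln_sin_moment(2)[OF _ ks1]) (simp add: C_def)
  have "(\<lambda>n. (- (real p * 2 ^ p)) * (- (C n / real n))) sums ((- (real p * 2 ^ p)) * K)"
    by (rule sums_mult[OF Ks])
  then have "(\<lambda>n. real p * 2 ^ p * (C n / real n)) sums (- (real p * 2 ^ p * K))" by simp
  with ks2 have RK: "R = - (real p * 2 ^ p * K)" by (rule sums_unique2)
  have Bint: "((\<lambda>x. x ^ (p - 1) * (- ln (sin (pi * x) / (pi * x)))) has_integral B) {0..1/2}"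
    unfolding B_def by (rule m_side_integral[OF p])
  have Lint: "((\<lambda>x. x ^ (p - 1) * ln (2 * pi * x)) has_integral L) {0..1/2}"
    unfolding L_def by (rule log_moment[OF p])
  have Kint2: "((\<lambda>x. x ^ (p - 1) * ln (2 * sin (pi * x))) has_integral K) {0..1/2}"
    unfolding K_def using Kint by (rule integrable_integral)
  have "((\<lambda>x. x ^ (p - 1) * ln (2 * pi * x) - x ^ (p - 1) * ln (2 * sin (pi * x))) has_integral (L - K)) {0..1/2}"
    by (rule has_integral_diff[OF Lint Kint2])
  moreover have "x ^ (p - 1) * ln (2 * pi * x) - x ^ (p - 1) * ln (2 * sin (pi * x)) = x ^ (p - 1) * (- ln (sin (pi * x) / (pi * x)))"
    if "x \<in> {0..1/2}" for x
  proof (cases "x = 0")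
    case True then show ?thesis by simp
  next
    case False
    then have x0: "0 < x" and x1: "x \<le> 1/2" using that by auto
    have sp: "0 < sin (pi * x)" using x0 x1 by (intro sin_gt_zero) auto
    have "ln (sin (pi * x) / (pi * x)) = ln ((2 * sin (pi * x)) / (2 * pi * x))" by simp
    also have "\<dots> = ln (2 * sin (pi * x)) - ln (2 * pi * x)" using sp x0 by (intro ln_divide_pos) auto
    finally have E: "ln (sin (pi * x) / (pi * x)) = ln (2 * sin (pi * x)) - ln (2 * pi * x)" .
    show ?thesis unfolding E by (simp add: algebra_simps)
  qed
  ultimately have "((\<lambda>x. x ^ (p - 1) * (- ln (sin (pi * x) / (pi * x)))) has_integral (L - K)) {0..1/2}"
    by (rule has_integral_eq[rotated]) 
  with Bint have BLK: "B = L - K" by (rule has_integral_unique)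
  have As: "(\<lambda>n. zeta_nat (2 * Suc n) * (1/2) ^ (2 * Suc n) / real (Suc n)) sums (- ln (sin (pi * (1/2)) / (pi * (1/2))))"
    by (rule logsin_series) auto
  have Aval: "- ln (sin (pi * (1/2)) / (pi * (1/2))) = ln pi - ln 2"
    by (simp add: ln_div)
  have Bs: "(\<lambda>n. zeta_nat (2 * Suc n) * (1/2) ^ (2 * Suc n + p) / (real (Suc n) * real (2 * Suc n + p))) sums B"
  proof -
    have "summable (\<lambda>n. zeta_nat (2 * Suc n) * (1/2) ^ (2 * Suc n + p) / (real (Suc n) * real (2 * Suc n + p)))"
    proof (rule summable_comparison_test'[where N = 0])
      show "summable (\<lambda>n. zeta_nat (2 * Suc n) * (1/2) ^ (2 * Suc n) / real (Suc n))" using As by (rule sums_summable)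
      show "norm (zeta_nat (2 * Suc n) * (1/2) ^ (2 * Suc n + p) / (real (Suc n) * real (2 * Suc n + p)))
            \<le> zeta_nat (2 * Suc n) * (1/2) ^ (2 * Suc n) / real (Suc n)" for n
      proof -
        have z: "0 \<le> zeta_nat (2 * Suc n)" by (rule zeta_even_nonneg)
        have pw: "(1/2::real) ^ (2 * Suc n + p) \<le> (1/2) ^ (2 * Suc n)" by (rule power_decreasing) auto
        have "(1/2::real) ^ (2 * Suc n + p) / real (2 * Suc n + p) \<le> (1/2::real) ^ (2 * Suc n + p) / 1"
          by (rule divide_left_mono) auto
        then have "(1/2::real) ^ (2 * Suc n + p) / real (2 * Suc n + p) \<le> (1/2::real) ^ (2 * Suc n + p)"
          by (simp only: div_by_1)
        then have "(1/2::real) ^ (2 * Suc n + p) / real (2 * Suc n + p) \<le> (1/2) ^ (2 * Suc n)"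
          using pw by (rule order_trans)
        then have "zeta_nat (2 * Suc n) * ((1/2::real) ^ (2 * Suc n + p) / real (2 * Suc n + p)) / real (Suc n)
                 \<le> zeta_nat (2 * Suc n) * (1/2) ^ (2 * Suc n) / real (Suc n)"
          using z by (intro divide_right_mono mult_left_mono) auto
        moreover have "0 \<le> zeta_nat (2 * Suc n) * (1/2) ^ (2 * Suc n + p) / (real (Suc n) * real (2 * Suc n + p))"
          using z by simp
        ultimately show ?thesis by (simp add: field_simps)
      qed
    qed
    then show ?thesis unfolding B_def by (rule summable_sums)
  qed
  have tmq: "zeta_nat (2 * Suc n) / (real (2 * Suc n + p) * 2 ^ (2 * Suc n)) =
      (1/2) * (zeta_nat (2 * Suc n) * (1/2) ^ (2 * Suc n) / real (Suc n)
       - real p * 2 ^ p * (zeta_nat (2 * Suc n) * (1/2) ^ (2 * Suc n + p) / (real (Suc n) * real (2 * Suc n + p))))" for n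
  proof -
    define m where "m = real (Suc n)"
    have m0: "0 < m" by (simp add: m_def)
    have e1: "real (2 * Suc n + p) = 2 * m + real p" by (simp add: m_def)
    have e2: "(1/2::real) ^ (2 * Suc n + p) = (1/2) ^ (2 * Suc n) * (1/2) ^ p" by (simp add: power_add)
    have e3: "(2::real) ^ p * (1/2) ^ p = 1" by (simp add: power_mult_distrib[symmetric])
    have e4: "(1/2::real) ^ (2 * Suc n) = 1 / 2 ^ (2 * Suc n)" by (simp add: power_divide)
    define Z where "Z = zeta_nat (2 * Suc n)"
    define Q :: real where "Q = 2 ^ (2 * Suc n)"
    have Q0: "0 < Q" by (simp add: Q_def)
    have g1: "T * (Z * (1 / Q * S) / X) = (T * S) * (Z / Q / X)" for T S Z Q X :: real
      by (simp add: divide_inverse mult_ac)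
    have r1: "(2::real) ^ p * (Z * (1 / Q * (1/2) ^ p) / (m * (2 * m + real p))) = ((2::real) ^ p * (1/2) ^ p) * (Z / Q / (m * (2 * m + real p)))"
      by (rule g1)
    have r2: "(1/2) * (Z * (1 / Q) / m - real p * (Z / Q / (m * (2 * m + real p)))) = Z / ((2 * m + real p) * Q)"
    proof -
      have gen: "(1/2) * (Z * (1 / Q) / m - P * (Z / Q / (m * D))) = Z / (D * Q)"
        if hD: "D - P = 2 * m" and "0 < m" "0 < D" "0 < Q" for Z Q m P D :: real
      proof -
        have "Z * (1 / Q) / m - P * (Z / Q / (m * D)) = (Z / (Q * m)) * ((D - P) / D)"
          using that(2-4) by (simp add: field_simps)
        also have "\<dots> = (Z / (Q * m)) * (2 * m / D)" unfolding hD ..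
        finally have "Z * (1 / Q) / m - P * (Z / Q / (m * D)) = (Z / (Q * m)) * (2 * m / D)" .
        then show ?thesis using that(2-4) by (simp add: field_simps)
      qed
      show ?thesis by (rule gen) (use m0 pp Q0 in auto)
    qed
    have "Z / ((2 * m + real p) * Q) = (1/2) * (Z * (1 / Q) / m - real p * (2 ^ p * (Z * (1 / Q * (1/2) ^ p) / (m * (2 * m + real p)))))"
      unfolding r1 e3 using r2 by simp
    then show ?thesis unfolding e1 e2 e4 Z_def[symmetric] Q_def[symmetric] m_def[symmetric] by (simp add: mult.assoc)
  qed
  have Ts: "(\<lambda>n. zeta_nat (2 * Suc n) / (real (2 * Suc n + p) * 2 ^ (2 * Suc n))) sums ((1/2) * ((ln pi - ln 2) - real p * 2 ^ p * B))"
  proof -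
    have "(\<lambda>n. (1/2) * (zeta_nat (2 * Suc n) * (1/2) ^ (2 * Suc n) / real (Suc n)
       - real p * 2 ^ p * (zeta_nat (2 * Suc n) * (1/2) ^ (2 * Suc n + p) / (real (Suc n) * real (2 * Suc n + p)))))
       sums ((1/2) * ((ln pi - ln 2) - real p * 2 ^ p * B))"
      using As Aval Bs by (intro sums_mult sums_diff) auto
    then show ?thesis by (simp only: tmq)
  qed
  have Full: "(\<lambda>n. zeta_nat (2 * n) / (real (2 * n + p) * 2 ^ (2 * n))) sums
       ((1/2) * ((ln pi - ln 2) - real p * 2 ^ p * B) + zeta_nat (2 * 0) / (real (2 * 0 + p) * 2 ^ (2 * 0)))"
    using Ts by (subst (asm) sums_Suc_iff) simp
  have z0: "zeta_nat (2 * 0) / (real (2 * 0 + p) * 2 ^ (2 * 0)) = - 1 / (2 * real p)"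
    by (simp add: zeta_nat_def)
  have PL: "real p * 2 ^ p * L = ln pi - 1 / real p"
  proof -
    have "real p * 2 ^ p * L = (2 ^ p * (1/2) ^ p) * ln pi - (2 ^ p * (1/2) ^ p) / real p"
      unfolding L_def using pp by (simp add: field_simps power2_eq_square)
    also have "(2::real) ^ p * (1/2) ^ p = 1" by (simp add: power_mult_distrib[symmetric])
    finally show ?thesis by simp
  qed
  have "(\<Sum>n. zeta_nat (2 * n) / (real (2 * n + p) * 2 ^ (2 * n))) =
        (1/2) * ((ln pi - ln 2) - real p * 2 ^ p * B) - 1 / (2 * real p)"
    using Full z0 by (simp add: sums_iff)
  then have "- 2 * (\<Sum>n. zeta_nat (2 * n) / (real (2 * n + p) * 2 ^ (2 * n))) =
        - (ln pi - ln 2) + real p * 2 ^ p * B + 1 / real p"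
    using pp by (simp add: field_simps)
  also have "\<dots> = ln 2 + R"
    unfolding BLK RK using PL by (simp add: algebra_simps)
  finally show ?thesis unfolding R_def by simp
qed


end
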